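(* Let $p$ be a prime, $q$ a power of $p$, $F$ a field of characteristic $p$ containing $\mathbb{F}_q$, and $s>1$ an integer such that $\mathbb{F}_{q^s}$ is not contained in $F$. Let $L(x)=a_0x+a_1x^{q^s}+\cdots+a_mx^{q^{ms}}\in F[x]$ with $m\geq1$, $a_m\neq0$, and with no repeated roots in its splitting field $E$ over $F$; put $n=ms$ and let $v_1,\dots,v_n$ be an ordered $\mathbb{F}_q$-basis of the space of roots of $L$. Then the map $\epsilon_s:H_{n,s}(\mathbb{F}_q)\to E$, $\epsilon_s(P)=P(v_1,\dots,v_n)$, is not injective.
   Context: $H_{n,s}(\mathbb{F}_q)$ is the space of homogeneous polynomials of degree $s$ in $\mathbb{F}_q[x_1,\dots,x_n]$ together with $0$. Such an $L$ is called a $q^s$-polynomial; its roots form an $\mathbb{F}_q$-space of dimension $ms$. *)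

theory Defs
  imports "HOL-Computational_Algebra.Polynomial"
begin

definition is_subfield :: "'a::field set \<Rightarrow> bool" where
  "is_subfield K \<longleftrightarrow> 0 \<in> K \<and> 1 \<in> K \<and>
     (\<forall>x\<in>K. \<forall>y\<in>K. x + y \<in> K \<and> x * y \<in> K) \<and>
     (\<forall>x\<in>K. - x \<in> K) \<and> (\<forall>x\<in>K. x \<noteq> 0 \<longrightarrow> inverse x \<in> K)"

definition hom_monos :: "nat \<Rightarrow> nat \<Rightarrow> (nat \<Rightarrow> nat) set" where
  "hom_monos n s = {\<alpha>. (\<forall>j\<ge>n. \<alpha> j = 0) \<and> (\<Sum>j<n. \<alpha> j) = s}"

text \<open>H_{n,s}(K): homogeneous polynomials of degree s in n variables with coefficients
  in K (together with 0), represented by their coefficient functions on monomials.\<close>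
definition Hns :: "'a::field set \<Rightarrow> nat \<Rightarrow> nat \<Rightarrow> ((nat \<Rightarrow> nat) \<Rightarrow> 'a) set" where
  "Hns K n s = {c. (\<forall>\<alpha>. c \<alpha> \<in> K) \<and> (\<forall>\<alpha>. \<alpha> \<notin> hom_monos n s \<longrightarrow> c \<alpha> = 0)}"

definition eval_hom :: "nat \<Rightarrow> nat \<Rightarrow> ((nat \<Rightarrow> nat) \<Rightarrow> 'a::field) \<Rightarrow> (nat \<Rightarrow> 'a) \<Rightarrow> 'a" where
  "eval_hom n s c v = (\<Sum>\<alpha>\<in>hom_monos n s. c \<alpha> * (\<Prod>j<n. v j ^ \<alpha> j))"

end

theory Submission
  imports Defs "HOL-Library.FuncSet"
begin

lemma frob_add:
  fixes x y :: "'a::comm_ring_1"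
  assumes "prime CHAR('a)"
  shows "(x + y) ^ (CHAR('a) ^ t) = x ^ (CHAR('a) ^ t) + y ^ (CHAR('a) ^ t)"
  by (rule freshmans_dream') (use assms in auto)

lemma frob_diff:
  fixes x y :: "'a::comm_ring_1"
  assumes "prime CHAR('a)"
  shows "(x - y) ^ (CHAR('a) ^ t) = x ^ (CHAR('a) ^ t) - y ^ (CHAR('a) ^ t)"
proof -
  have "x ^ (CHAR('a) ^ t) = ((x - y) + y) ^ (CHAR('a) ^ t)" by simp
  also have "\<dots> = (x - y) ^ (CHAR('a) ^ t) + y ^ (CHAR('a) ^ t)" by (rule frob_add[OF assms])
  finally show ?thesis by (simp add: algebra_simps)
qed

lemma frob_sum:
  fixes f :: "'b \<Rightarrow> 'a::comm_ring_1"
  assumes "prime CHAR('a)"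
  shows "(sum f A) ^ (CHAR('a) ^ t) = (\<Sum>i\<in>A. f i ^ (CHAR('a) ^ t))"
  by (rule freshmans_dream_sum') (use assms in auto)

lemma mod_rot1: "j < s \<Longrightarrow> ((j + (s - 1)) mod s + 1) mod s = j" for j s :: nat
  by (metis Suc_pred' add.commute add_Suc_right mod_Suc_eq mod_add_self1 mod_less neq0_conv not_less0 plus_1_eq_Suc)

lemma mod_rot2: "j < s \<Longrightarrow> ((j + 1) mod s + (s - 1)) mod s = j" for j s :: nat
  by (metis (no_types, lifting) add.commute add_diff_inverse_nat gr_implies_not0 less_one mod_add_left_eq mod_add_self2 mod_less plus_1_eq_Suc add_Suc_right)

lemma mod_rot1': "j < s \<Longrightarrow> Suc ((j + s - Suc 0) mod s) mod s = j" for j s :: nat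
  using mod_rot1[of j s] by simp

lemma mod_rot2': "j < s \<Longrightarrow> (Suc j mod s + s - Suc 0) mod s = j" for j s :: nat
  using mod_rot2[of j s] by simp

lemma norm_form_kernel:
  fixes e v :: "nat \<Rightarrow> 'a::field" and q s n k i0 :: nat
  assumes pr: "prime CHAR('a)" and qdef: "q = CHAR('a) ^ k"
    and s1: "s \<ge> 1" and i0: "i0 < n" and e1: "e i0 = 1"
    and eK: "\<forall>i<n. e i ^ (q ^ s) = e i" and rel: "(\<Sum>i<n. e i * v i) = 0"
  shows "\<exists>P \<in> Hns {x. x ^ q = x} n s. P \<noteq> (\<lambda>_. 0) \<and> eval_hom n s P v = 0"
proof -
  define S where "S = PiE {..<s} (\<lambda>_. {..<n})"
  define cnt where "cnt f = (\<lambda>i. card {j \<in> {..<s}. f j = i})" for f :: "nat \<Rightarrow> nat"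
  define w where "w f = (\<Prod>j<s. e (f j) ^ (q ^ j))" for f :: "nat \<Rightarrow> nat"
  define A where "A \<alpha> = {f \<in> S. cnt f = \<alpha>}" for \<alpha>
  define P where "P \<alpha> = (\<Sum>f\<in>A \<alpha>. w f)" for \<alpha>
  define rot where "rot f = (\<lambda>j. if j < s then f ((j + (s - 1)) mod s) else undefined)" for f :: "nat \<Rightarrow> nat"
  define rot' where "rot' f = (\<lambda>j. if j < s then f ((j + 1) mod s) else undefined)" for f :: "nat \<Rightarrow> nat"
  have s0: "s > 0" using s1 by simp
  have finS: "finite S" unfolding S_def by (simp add: finite_PiE)
  have Sout: "f j = undefined" if "f \<in> S" "\<not> j < s" for f j
    using that unfolding S_def by (auto simp: PiE_def extensional_def)
  have Sin: "f j < n" if "f \<in> S" "j < s" for f j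
    using that unfolding S_def by auto
  have cnt_hom: "cnt f \<in> hom_monos n s" if "f \<in> S" for f
  proof -
    have "\<forall>i\<ge>n. cnt f i = 0"
      using Sin[OF that] unfolding cnt_def by (auto simp: card_eq_0_iff) (meson leD)
    moreover have "(\<Sum>i<n. cnt f i) = s"
    proof -
      have "(\<Sum>i<n. \<Sum>j\<in>{j \<in> {..<s}. f j = i}. (1::nat)) = (\<Sum>j<s. 1)"
        by (rule sum.group) (use Sin[OF that] in auto)
      then show ?thesis unfolding cnt_def by simp
    qed
    ultimately show ?thesis unfolding hom_monos_def by auto
  qed
  have rot_S: "rot f \<in> S" if "f \<in> S" for f
    using Sin[OF that] s0 unfolding rot_def S_def by (auto split: if_split_asm)
  have rot'_S: "rot' f \<in> S" if "f \<in> S" for f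
    using Sin[OF that] s0 unfolding rot'_def S_def by (auto split: if_split_asm)
  have rot_rot': "rot (rot' f) = f" if "f \<in> S" for f
  proof
    fix j show "rot (rot' f) j = f j"
    proof (cases "j < s")
      case True
      have "(j + (s - 1)) mod s < s" using s0 by simp
      then show ?thesis using True unfolding rot_def rot'_def by (simp only: if_True mod_rot1)
    qed (use Sout[OF that] in \<open>simp add: rot_def\<close>)
  qed
  have rot'_rot: "rot' (rot f) = f" if "f \<in> S" for f
  proof
    fix j show "rot' (rot f) j = f j"
    proof (cases "j < s")
      case True
      have "(j + 1) mod s < s" using s0 by simp
      then show ?thesis using True unfolding rot_def rot'_def by (simp only: if_True mod_rot2)
    qed (use Sout[OF that] in \<open>simp add: rot'_def\<close>)
  qed
  have cnt_rot: "cnt (rot f) = cnt f" if "f \<in> S" for f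
  proof
    fix i
    have "bij_betw (\<lambda>j. (j + (s - 1)) mod s) {j \<in> {..<s}. rot f j = i} {j \<in> {..<s}. f j = i}"
      by (rule bij_betw_byWitness[where f' = "\<lambda>j. (j + 1) mod s"])
         (auto simp: rot_def mod_rot1 mod_rot2 mod_rot1' mod_rot2' s0)
    then show "cnt (rot f) i = cnt f i" unfolding cnt_def by (rule bij_betw_same_card)
  qed
  have cnt_rot': "cnt (rot' f) = cnt f" if "f \<in> S" for f
    using cnt_rot[OF rot'_S[OF that]] rot_rot'[OF that] by simp
  have eK': "e i ^ (q ^ ((j + 1) mod s)) = e i ^ (q ^ Suc j)" if "i < n" "j < s" for i j
  proof (cases "j + 1 < s")
    case True then show ?thesis by simp
  next
    case False
    then have "j + 1 = s" using that by simp
    then show ?thesis using eK that by simp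
  qed
  have w_rot: "w (rot f) = (w f) ^ q" if "f \<in> S" for f
  proof -
    have "w (rot f) = (\<Prod>j<s. e (f ((j + (s - 1)) mod s)) ^ (q ^ j))"
      unfolding w_def rot_def by simp
    also have "\<dots> = (\<Prod>j<s. e (f (((j + 1) mod s + (s - 1)) mod s)) ^ (q ^ ((j + 1) mod s)))"
      by (rule sym, rule prod.reindex_bij_witness[where i = "\<lambda>j. (j + (s - 1)) mod s" and j = "\<lambda>j. (j + 1) mod s"])
         (auto simp: mod_rot1 mod_rot2 mod_rot1' mod_rot2' s0)
    also have "\<dots> = (\<Prod>j<s. e (f j) ^ (q ^ Suc j))"
    proof (rule prod.cong)
      fix j assume "j \<in> {..<s}"
      then have j: "j < s" by simp
      show "e (f (((j + 1) mod s + (s - 1)) mod s)) ^ (q ^ ((j + 1) mod s)) = e (f j) ^ (q ^ Suc j)"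
        unfolding mod_rot2[OF j] using eK'[OF Sin[OF that j] j] .
    qed simp
    also have "\<dots> = (w f) ^ q"
      unfolding w_def by (simp add: prod_power_distrib power_mult[symmetric] mult.commute)
    finally show ?thesis .
  qed
  have Pq: "P \<alpha> ^ q = P \<alpha>" for \<alpha>
  proof -
    have "P \<alpha> ^ q = (\<Sum>f\<in>A \<alpha>. w f ^ q)"
      unfolding P_def qdef by (rule frob_sum[OF pr])
    also have "\<dots> = (\<Sum>f\<in>A \<alpha>. w (rot f))"
      by (rule sum.cong) (auto simp: A_def w_rot)
    also have "\<dots> = (\<Sum>f\<in>A \<alpha>. w f)"
      by (rule sum.reindex_bij_witness[where i = rot' and j = rot])
         (auto simp: A_def rot_S rot'_S rot_rot' rot'_rot cnt_rot cnt_rot')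
    finally show ?thesis unfolding P_def .
  qed
  have P0: "P \<alpha> = 0" if "\<alpha> \<notin> hom_monos n s" for \<alpha>
  proof -
    have "A \<alpha> = {}" using cnt_hom that unfolding A_def by auto
    then show ?thesis unfolding P_def by simp
  qed
  have PH: "P \<in> Hns {x. x ^ q = x} n s"
    unfolding Hns_def using Pq P0 by auto
  define \<alpha>0 where "\<alpha>0 = (\<lambda>i. if i = i0 then s else 0)"
  define f0 where "f0 = (\<lambda>j::nat. if j < s then i0 else undefined)"
  have f0S: "f0 \<in> S" unfolding f0_def S_def using i0 by (auto split: if_split_asm)
  have cntf0: "cnt f0 = \<alpha>0"
  proof
    fix i
    show "cnt f0 i = \<alpha>0 i"
    proof (cases "i = i0")
      case True
      then have "{j \<in> {..<s}. f0 j = i} = {..<s}" unfolding f0_def by auto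
      then show ?thesis using True unfolding cnt_def \<alpha>0_def by simp
    next
      case False
      then have "{j \<in> {..<s}. f0 j = i} = {}" unfolding f0_def by auto
      then show ?thesis using False unfolding cnt_def \<alpha>0_def by simp
    qed
  qed
  have "A \<alpha>0 = {f0}"
  proof
    show "{f0} \<subseteq> A \<alpha>0" using f0S cntf0 unfolding A_def by auto
    show "A \<alpha>0 \<subseteq> {f0}"
    proof
      fix f assume "f \<in> A \<alpha>0"
      then have fS: "f \<in> S" and c: "cnt f = \<alpha>0" unfolding A_def by auto
      have "card {j \<in> {..<s}. f j = i0} = card {..<s}"
        using fun_cong[OF c, of i0] unfolding cnt_def \<alpha>0_def by simp
      then have "{j \<in> {..<s}. f j = i0} = {..<s}"
        by (intro card_subset_eq) auto
      then have "\<forall>j<s. f j = i0" by blast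
      then have "f = f0" unfolding f0_def using Sout[OF fS] by (intro ext) auto
      then show "f \<in> {f0}" by simp
    qed
  qed
  then have "P \<alpha>0 = 1" unfolding P_def w_def f0_def by (simp add: e1)
  then have Pnz: "P \<noteq> (\<lambda>_. 0)" by (metis one_neq_zero)
  have ev: "eval_hom n s P v = 0"
  proof (cases "finite (hom_monos n s)")
    case False
    then show ?thesis unfolding eval_hom_def by simp
  next
    case True
    have mono: "(\<Prod>i<n. v i ^ cnt f i) = (\<Prod>j<s. v (f j))" if fS: "f \<in> S" for f
    proof -
      have "(\<Prod>j<s. v (f j)) = (\<Prod>i<n. \<Prod>j\<in>{j \<in> {..<s}. f j = i}. v (f j))"
        by (rule sym, rule prod.group) (use Sin[OF fS] in auto)
      also have "\<dots> = (\<Prod>i<n. v i ^ cnt f i)"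
        unfolding cnt_def by (rule prod.cong) auto
      finally show ?thesis by simp
    qed
    have "eval_hom n s P v = (\<Sum>\<alpha>\<in>hom_monos n s. \<Sum>f\<in>{f \<in> S. cnt f = \<alpha>}. w f * (\<Prod>i<n. v i ^ cnt f i))"
      unfolding eval_hom_def P_def A_def by (simp add: sum_distrib_right)
    also have "\<dots> = (\<Sum>f\<in>S. w f * (\<Prod>i<n. v i ^ cnt f i))"
      by (rule sum.group) (use True finS cnt_hom in auto)
    also have "\<dots> = (\<Sum>f\<in>S. \<Prod>j<s. e (f j) ^ (q ^ j) * v (f j))"
      by (rule sum.cong) (auto simp: mono w_def prod.distrib)
    also have "\<dots> = (\<Prod>j<s. \<Sum>i<n. e i ^ (q ^ j) * v i)"
      unfolding S_def by (rule sym, rule prod_sum_PiE) auto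
    also have "\<dots> = 0"
      using rel s0 by (intro prod_zero) (auto intro!: bexI[of _ 0])
    finally show ?thesis .
  qed
  show ?thesis using PH Pnz ev by blast
qed


lemma coeff_qsum:
  fixes b :: "nat \<Rightarrow> 'a::comm_ring_1" and q s m :: nat
  assumes "q \<ge> 2" "s \<ge> 1"
  shows "coeff (\<Sum>i\<le>m. monom (b i) (q ^ (i * s))) (q ^ (m * s)) = b m"
    and "degree (\<Sum>i\<le>m. monom (b i) (q ^ (i * s))) \<le> q ^ (m * s)"
proof -
  have eq: "q ^ (i * s) = q ^ (m * s) \<longleftrightarrow> i = m" for i
    using assms by (simp add: power_inject_exp)
  show "coeff (\<Sum>i\<le>m. monom (b i) (q ^ (i * s))) (q ^ (m * s)) = b m"
    unfolding coeff_sum coeff_monom eq by simp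
  show "degree (\<Sum>i\<le>m. monom (b i) (q ^ (i * s))) \<le> q ^ (m * s)"
  proof (rule degree_le, intro allI impI)
    fix t assume t: "q ^ (m * s) < t"
    have "q ^ (i * s) \<le> q ^ (m * s)" if "i \<le> m" for i
      using assms that by (intro power_increasing) auto
    then show "coeff (\<Sum>i\<le>m. monom (b i) (q ^ (i * s))) t = 0"
      unfolding coeff_sum coeff_monom using t by (intro sum.neutral) (auto dest: leD)
  qed
qed

theorem theorem7p6:
  fixes p q k s m n :: nat and F :: "'a::field set"
    and a :: "nat \<Rightarrow> 'a" and L :: "'a poly" and v :: "nat \<Rightarrow> 'a"
  assumes "prime p" and "CHAR('a) = p"
    and "k \<ge> 1" and "q = p ^ k"
    and "is_subfield F"
    and "card {x::'a. x ^ q = x} = q" and "{x::'a. x ^ q = x} \<subseteq> F"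
    and "s > 1"
    and "\<not> (\<exists>K. K \<subseteq> F \<and> is_subfield K \<and> finite K \<and> card K = q ^ s)"
    and "m \<ge> 1" and "\<forall>i\<le>m. a i \<in> F" and "a m \<noteq> 0"
    and "L = (\<Sum>i\<le>m. monom (a i) (q ^ (i * s)))"
    and "L = smult (lead_coeff L) (\<Prod>x\<in>{x. poly L x = 0}. [:- x, 1:])"
    and "rsquarefree L"
    and "n = m * s"
    and "{x. poly L x = 0} = {\<Sum>i<n. c i * v i | c. \<forall>i<n. c i \<in> {x::'a. x ^ q = x}}"
    and "\<forall>c. (\<forall>i<n. c i \<in> {x::'a. x ^ q = x}) \<and> (\<Sum>i<n. c i * v i) = 0
              \<longrightarrow> (\<forall>i<n. c i = 0)"
  shows "\<not> inj_on (\<lambda>P. eval_hom n s P v) (Hns {x::'a. x ^ q = x} n s)"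
proof -
  note Ldef = assms(13)
  have pr: "prime CHAR('a)" using assms(1,2) by simp
  have qk: "q = CHAR('a) ^ k" using assms(2,4) by simp
  have q2: "q \<ge> 2"
  proof -
    have "p \<ge> 2" using assms(1) prime_ge_2_nat by blast
    moreover have "p \<le> p ^ k" using assms(3) \<open>p \<ge> 2\<close> by (simp add: self_le_power)
    ultimately show ?thesis using assms(4) by simp
  qed
  have s1: "s \<ge> 1" using assms(8) by simp
  define Q where "Q = q ^ s"
  have QC: "Q = CHAR('a) ^ (k * s)" unfolding Q_def qk by (simp add: power_mult)
  have Qq: "q < Q" unfolding Q_def using q2 assms(8) power_strict_increasing_iff[of q 1 s] by simp
  have qis: "q ^ (i * s) = Q ^ i" for i unfolding Q_def by (simp add: power_mult[symmetric] mult.commute)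
  have qisC: "q ^ (i * s) = CHAR('a) ^ (k * (i * s))" for i unfolding qk by (simp add: power_mult)
  have KQ: "x ^ (Q ^ i) = x" if "x ^ Q = x" for x :: 'a and i
  proof (induction i)
    case (Suc i)
    have "x ^ (Q ^ Suc i) = (x ^ (Q ^ i)) ^ Q" by (simp add: power_mult[symmetric] mult.commute)
    then show ?case using Suc that by simp
  qed simp
  define V where "V = {x. poly L x = 0}"
  have polyL: "poly L x = (\<Sum>i\<le>m. a i * x ^ (q ^ (i * s)))" for x
    unfolding Ldef by (simp add: poly_sum poly_monom)
  have cL: "coeff L (q ^ n) = a m" and dL: "degree L \<le> q ^ n"
    unfolding Ldef assms(16) using coeff_qsum[OF q2 s1] by auto
  have L0: "L \<noteq> 0" using cL assms(12) by auto
  have degL: "degree L = q ^ n" using cL dL assms(12) le_degree[of L "q ^ n"] by simp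
  have finV: "finite V" unfolding V_def using poly_roots_finite[OF L0] .
  have cardV: "card V = q ^ n"
  proof -
    have lc: "lead_coeff L \<noteq> 0" using L0 by simp
    have "degree L = degree (smult (lead_coeff L) (\<Prod>x\<in>V. [:- x, 1:]))"
      using assms(14) unfolding V_def by (rule arg_cong)
    also have "\<dots> = degree (\<Prod>x\<in>V. [:- x, 1:])"
      by (rule degree_smult_eq[of "lead_coeff L", unfolded if_not_P[OF lc]])
    also have "\<dots> = (\<Sum>x\<in>V. degree [:- x, 1:])"
      by (rule degree_prod_eq_sum_degree) auto
    also have "\<dots> = card V" by simp
    finally show ?thesis using degL by simp
  qed
  have addL: "poly L (x + y) = poly L x + poly L y" for x y
    unfolding polyL qisC frob_add[OF pr] by (simp add: sum.distrib algebra_simps)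
  have L0z: "poly L 0 = 0" unfolding polyL using q2 by (intro sum.neutral) (simp add: zero_power)
  have smulL: "poly L (c * x) = c * poly L x" if "c ^ Q = c" for c x
    unfolding polyL qis power_mult_distrib KQ[OF that] by (simp add: sum_distrib_left algebra_simps)
  have sumL: "poly L (sum f A) = (\<Sum>i\<in>A. poly L (f i))" for f :: "nat \<Rightarrow> 'a" and A
    by (induction A rule: infinite_finite_induct) (auto simp: L0z addL)
  have vV: "v i \<in> V" if "i < n" for i
  proof -
    define c where "c = (\<lambda>j. if j = i then 1 else (0::'a))"
    have "(\<Sum>j<n. c j * v j) = (\<Sum>j<n. if j = i then v j else 0)"
      by (rule sum.cong) (auto simp: c_def)
    also have "\<dots> = v i" using that by (simp add: sum.delta)
    finally have "(\<Sum>j<n. c j * v j) = v i" .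
    moreover have "\<forall>j<n. c j \<in> {x::'a. x ^ q = x}" unfolding c_def using q2 by (auto simp: zero_power)
    ultimately have "v i \<in> {\<Sum>i<n. c i * v i | c. \<forall>i<n. c i \<in> {x::'a. x ^ q = x}}"
      by (intro CollectI exI[of _ c] conjI) (simp_all only:)
    then show ?thesis unfolding V_def assms(17) .
  qed
  have nq: "q ^ n \<ge> 2"
  proof -
    have "n \<ge> 1" using assms(10,16) s1 by simp
    then have "q \<le> q ^ n" using q2 by (simp add: self_le_power)
    then show ?thesis using q2 by simp
  qed
  obtain u where uV: "u \<in> V" and u0: "u \<noteq> 0"
  proof -
    have "\<not> V \<subseteq> {0}"
    proof
      assume "V \<subseteq> {0}"
      then have "card V \<le> 1" using card_mono[of "{0}" V] by simp
      then show False using cardV nq by simp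
    qed
    then show ?thesis using that by blast
  qed
  define b where "b i = a i * u ^ (q ^ (i * s))" for i
  define X where "X = [:0, 1::'a:]"
  define G where "G = (\<Sum>i\<le>m. monom (b i) (q ^ (i * s)))"
  have cG: "coeff G (q ^ n) = b m" and dG: "degree G \<le> q ^ n"
    unfolding G_def assms(16) using coeff_qsum[OF q2 s1] by auto
  have bm: "b m \<noteq> 0" unfolding b_def using assms(12) u0 by simp
  have G0: "G \<noteq> 0" using cG bm by auto
  have degG: "degree G = q ^ n" using cG dG bm le_degree[of G "q ^ n"] by simp
  have polyG: "poly G c = poly L (c * u)" for c
    unfolding G_def polyL b_def by (simp add: poly_sum poly_monom power_mult_distrib algebra_simps)
  define D where "D = X ^ Q - X"
  have polyD: "poly D c = c ^ Q - c" for c unfolding D_def X_def by simp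
  have cD: "coeff D Q = 1"
    using Qq q2 unfolding D_def X_def by (simp add: coeff_linear_power[of 0, simplified] coeff_pCons split: nat.split)
  have D0: "D \<noteq> 0" using cD by auto
  have degD: "Q \<le> degree D" using cD le_degree[of D Q] by simp
  have Ddvd: "D dvd X ^ (Q ^ i) - X" for i
  proof (induction i)
    case 0 then show ?case by simp
  next
    case (Suc i)
    have "(X ^ (Q ^ i) - X) ^ Q = X ^ (Q ^ i * Q) - X ^ Q"
      unfolding QC frob_diff[where 'a = "'a poly", simplified, OF pr] by (simp add: power_mult)
    then have "X ^ (Q ^ Suc i) - X = (X ^ (Q ^ i) - X) ^ Q + D"
      unfolding D_def by (simp add: mult.commute)
    moreover have "D dvd (X ^ (Q ^ i) - X) ^ Q"
    proof -
      have "(X ^ (Q ^ i) - X) dvd (X ^ (Q ^ i) - X) ^ Q" using Qq by (intro dvd_power) simp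
      then show ?thesis using Suc by (rule dvd_trans[rotated])
    qed
    ultimately show ?case by simp
  qed
  have sumb: "(\<Sum>i\<le>m. b i) = 0"
    using uV unfolding V_def polyL b_def by simp
  have Gsum: "G = (\<Sum>i\<le>m. smult (b i) (X ^ (Q ^ i) - X))"
  proof -
    have "(\<Sum>i\<le>m. smult (b i) (X ^ (Q ^ i) - X)) = (\<Sum>i\<le>m. smult (b i) (X ^ (Q ^ i))) - smult (\<Sum>i\<le>m. b i) X"
      by (simp add: smult_diff_right sum_subtractf smult_sum)
    also have "\<dots> = G" unfolding sumb G_def X_def qis by (simp add: monom_altdef)
    finally show ?thesis by simp
  qed
  have "D dvd G" unfolding Gsum by (intro dvd_sum dvd_smult Ddvd)
  then obtain h where Gh: "G = D * h" by (elim dvdE)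
  have h0: "h \<noteq> 0" using G0 Gh by auto
  have degsum: "degree G = degree D + degree h" using Gh D0 h0 by (simp add: degree_mult_eq)
  define K where "K = {x::'a. x ^ Q = x}"
  have KD: "K = {c. poly D c = 0}" unfolding K_def polyD by simp
  have finK: "finite K" unfolding KD using poly_roots_finite[OF D0] .
  have VG: "V = (\<lambda>c. c * u) ` {c. poly G c = 0}"
  proof
    show "(\<lambda>c. c * u) ` {c. poly G c = 0} \<subseteq> V" unfolding V_def polyG by auto
    show "V \<subseteq> (\<lambda>c. c * u) ` {c. poly G c = 0}"
    proof
      fix y assume "y \<in> V"
      then have "y / u \<in> {c. poly G c = 0}" "y = (y / u) * u" unfolding V_def polyG using u0 by auto
      then show "y \<in> (\<lambda>c. c * u) ` {c. poly G c = 0}" by blast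
    qed
  qed
  have "card V = card {c. poly G c = 0}"
    unfolding VG using u0 by (intro card_image) (auto simp: inj_on_def)
  also have "\<dots> \<le> card (K \<union> {c. poly h c = 0})"
    using finK poly_roots_finite[OF h0] Gh KD by (intro card_mono) auto
  also have "\<dots> \<le> card K + card {c. poly h c = 0}" by (rule card_Un_le)
  also have "\<dots> \<le> card K + degree h" using card_poly_roots_bound[OF h0] by simp
  finally have cardK: "Q \<le> card K" using cardV degG degsum degD by simp
  have Kdiff: "x - y \<in> K" if "x \<in> K" "y \<in> K" for x y
    using that unfolding K_def QC by (simp add: frob_diff[OF pr])
  have Kdiv: "x / y \<in> K" if "x \<in> K" "y \<in> K" for x y
    using that unfolding K_def by (simp add: power_divide)
  define PI where "PI = PiE {..<n} (\<lambda>_. K)"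
  define Phi where "Phi c = (\<Sum>i<n. c i * v i)" for c
  have PhiV: "Phi ` PI \<subseteq> V"
  proof
    fix y assume "y \<in> Phi ` PI"
    then obtain c where c: "c \<in> PI" "y = Phi c" by blast
    have "poly L y = (\<Sum>i<n. poly L (c i * v i))" unfolding c Phi_def sumL ..
    also have "\<dots> = 0"
    proof (intro sum.neutral ballI)
      fix i assume i: "i \<in> {..<n}"
      then have "c i ^ Q = c i" using c(1) unfolding PI_def K_def by auto
      then show "poly L (c i * v i) = 0" using vV i unfolding V_def by (simp add: smulL)
    qed
    finally show "y \<in> V" unfolding V_def by simp
  qed
  have "card V < card PI"
  proof -
    have "card PI = card K ^ n" unfolding PI_def by (simp add: card_PiE)
    moreover have "Q ^ n \<le> card K ^ n" using cardK by (rule power_mono) simp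
    moreover have "q ^ n < Q ^ n"
    proof (rule power_strict_mono[OF Qq])
      show "0 < n" using assms(10,16) s1 by simp
    qed simp
    ultimately show ?thesis using cardV by simp
  qed
  have "\<not> inj_on Phi PI"
  proof
    assume "inj_on Phi PI"
    then have "card PI \<le> card V" using PhiV finV by (rule card_inj_on_le)
    then show False using \<open>card V < card PI\<close> by simp
  qed
  then obtain c1 c2 where c12: "c1 \<in> PI" "c2 \<in> PI" "c1 \<noteq> c2" "Phi c1 = Phi c2"
    unfolding inj_on_def by blast
  obtain i0 where i0: "i0 < n" "c1 i0 \<noteq> c2 i0"
    using c12(1-3) PiE_ext[of c1 "{..<n}" "\<lambda>_. K" c2] unfolding PI_def by auto
  define e where "e i = (c1 i - c2 i) / (c1 i0 - c2 i0)" for i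
  have eK: "\<forall>i<n. e i ^ (q ^ s) = e i"
  proof (intro allI impI)
    fix i assume "i < n"
    then have "c1 i \<in> K" "c2 i \<in> K" "c1 i0 \<in> K" "c2 i0 \<in> K" using c12 i0 unfolding PI_def by auto
    then have "e i \<in> K" unfolding e_def by (intro Kdiv Kdiff)
    then show "e i ^ (q ^ s) = e i" unfolding K_def Q_def by simp
  qed
  have e1: "e i0 = 1" unfolding e_def using i0 by simp
  have rel: "(\<Sum>i<n. e i * v i) = 0"
  proof -
    have "(\<Sum>i<n. e i * v i) = (Phi c1 - Phi c2) / (c1 i0 - c2 i0)"
      unfolding e_def Phi_def by (simp add: sum_divide_distrib[symmetric] sum_subtractf[symmetric] algebra_simps)
    then show ?thesis using c12(4) by simp
  qed
  obtain P where PH: "P \<in> Hns {x. x ^ q = x} n s" and Pnz: "P \<noteq> (\<lambda>_. 0)"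
    and Pev: "eval_hom n s P v = 0"
    using norm_form_kernel[OF pr qk s1 i0(1) e1 eK rel] by blast
  have ZH: "(\<lambda>_. 0) \<in> Hns {x::'a. x ^ q = x} n s" unfolding Hns_def using q2 by (simp add: zero_power)
  have Zev: "eval_hom n s (\<lambda>_. 0) v = 0" unfolding eval_hom_def by simp
  show ?thesis
  proof
    assume "inj_on (\<lambda>P. eval_hom n s P v) (Hns {x::'a. x ^ q = x} n s)"
    moreover have "eval_hom n s P v = eval_hom n s (\<lambda>_. 0) v" using Pev Zev by simp
    ultimately have "P = (\<lambda>_. 0)" using PH ZH by (rule inj_onD)
    then show False using Pnz by simp
  qed
qed

end
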